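(* Let $\nu$ be a probability distribution on $\mathbb{R}^k$, $\mathcal{G}$ a class of measurable maps $\mathbb{R}^k\to\mathbb{R}^d$, $\mathcal{F}$ a symmetric class of real functions and $\Omega\subseteq\mathbb{R}^d$. Assume $\mu$ and $g_\#\nu$ are supported on $\Omega$ for all $g\in\mathcal{G}$. Let $\widetilde\mu_n$ be any probability distribution supported on $\Omega$, let $Z_1,\dots,Z_m$ be points of $\mathbb{R}^k$ with $\widehat\nu_m=\frac1m\sum_j\delta_{Z_j}$, let $\epsilon_{opt}\ge 0$, and let $\widetilde g_n^*\in\mathcal{G}$ with $d_{\mathcal{F}}(\widetilde\mu_n,(\widetilde g_n^* )_\#\nu)\le\inf_{\phi\in\mathcal{G}}d_{\mathcal{F}}(\widetilde\mu_n,\phi_\#\nu)+\epsilon_{opt}$ and $\widetilde g_{n,m}^*\in\mathcal{G}$ with $d_{\mathcal{F}}(\widetilde\mu_n,(\widetilde g_{n,m}^* )_\#\widehat\nu_m)\le\inf_{\phi\in\mathcal{G}}d_{\mathcal{F}}(\widetilde\mu_n,\phi_\#\widehat\nu_m)+\epsilon_{opt}$. Then for any function class $\mathcal{H}$ defined on $\Omega$, $$d_{\mathcal{H}}(\mu,(\widetilde g_n^* )_\#\nu)\le\epsilon_{opt}+2\mathcal{E}(\mathcal{H},\mathcal{F},\Omega)+\inf_{g\in\mathcal{G}}d_{\mathcal{F}}(\widetilde\mu_n,g_\#\nu)+d_{\mathcal{F}}(\mu,\widetilde\mu_n)\land d_{\mathcal{H}}(\mu,\widetilde\mu_n),$$ $$d_{\mathcal{H}}(\mu,(\widetilde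 g_{n,m}^* )_\#\nu)\le\epsilon_{opt}+2\mathcal{E}(\mathcal{H},\mathcal{F},\Omega)+\inf_{g\in\mathcal{G}}d_{\mathcal{F}}(\widetilde\mu_n,g_\#\nu)+d_{\mathcal{F}}(\mu,\widetilde\mu_n)\land d_{\mathcal{H}}(\mu,\widetilde\mu_n)+2d_{\mathcal{F}\circ\mathcal{G}}(\nu,\widehat\nu_m).$$
   Context: $\mathcal{F}$ symmetric means $f\in\mathcal{F}\Rightarrow -f\in\mathcal{F}$. $d_{\mathcal{F}}(\mu,\gamma)=\sup_{f\in\mathcal{F}}\mathbb{E}_\mu[f]-\mathbb{E}_\gamma[f]$; $g_\#\nu(A)=\nu(g^{-1}(A))$; $\mathcal{F}\circ\mathcal{G}=\{f\circ g:f\in\mathcal{F},g\in\mathcal{G}\}$; $\mathcal{E}(\mathcal{H},\mathcal{F},\Omega)=\sup_{h\in\mathcal{H}}\inf_{f\in\mathcal{F}}\|h-f\|_{L^\infty(\Omega)}$; $a\land b=\min(a,b)$. *)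

theory Defs
  imports "HOL-Probability.Probability"
begin

definition ipm :: "('a \<Rightarrow> real) set \<Rightarrow> 'a measure \<Rightarrow> 'a measure \<Rightarrow> ereal" where
  "ipm F \<mu> \<gamma> = (SUP f\<in>F. ereal ((\<integral>x. f x \<partial>\<mu>) - (\<integral>x. f x \<partial>\<gamma>)))"

definition pushfwd :: "('a \<Rightarrow> 'b::topological_space) \<Rightarrow> 'a measure \<Rightarrow> 'b measure" where
  "pushfwd g \<nu> = distr \<nu> borel g"

definition comp_class :: "('b \<Rightarrow> real) set \<Rightarrow> ('a \<Rightarrow> 'b) set \<Rightarrow> ('a \<Rightarrow> real) set" where
  "comp_class F G = {f \<circ> g | f g. f \<in> F \<and> g \<in> G}"

text \<open>Empirical measure (1/m) sum_{j=1..m} delta_{Z j}, as a measure on the Borel sets.\<close>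
definition empirical :: "(nat \<Rightarrow> 'a::topological_space) \<Rightarrow> nat \<Rightarrow> 'a measure" where
  "empirical Z m = distr (measure_pmf (pmf_of_multiset (image_mset Z (mset_set {1..m})))) borel (\<lambda>x. x)"

definition approx_err :: "('a \<Rightarrow> real) set \<Rightarrow> ('a \<Rightarrow> real) set \<Rightarrow> 'a set \<Rightarrow> ereal" where
  "approx_err H F \<Omega> = (SUP h\<in>H. INF f\<in>F. SUP x\<in>\<Omega>. ereal \<bar>h x - f x\<bar>)"

end

theory Submission
  imports Defs
begin

lemma ipm_upper: "f \<in> F \<Longrightarrow> ereal ((\<integral>x. f x \<partial>\<mu>) - (\<integral>x. f x \<partial>\<gamma>)) \<le> ipm F \<mu> \<gamma>"
  unfolding ipm_def by (rule SUP_upper2) auto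

lemma ipm_nonneg:
  assumes "F \<noteq> {}" "\<And>f. f \<in> F \<Longrightarrow> (\<lambda>x. - f x) \<in> F"
  shows "0 \<le> ipm F \<mu> \<gamma>"
proof -
  obtain f where f: "f \<in> F" using assms by auto
  have a: "ereal ((\<integral>x. f x \<partial>\<mu>) - (\<integral>x. f x \<partial>\<gamma>)) \<le> ipm F \<mu> \<gamma>" using ipm_upper[OF f] .
  have b: "ereal ((\<integral>x. - f x \<partial>\<mu>) - (\<integral>x. - f x \<partial>\<gamma>)) \<le> ipm F \<mu> \<gamma>" using ipm_upper[OF assms(2)[OF f]] .
  have "(\<integral>x. - f x \<partial>\<mu>) - (\<integral>x. - f x \<partial>\<gamma>) = - ((\<integral>x. f x \<partial>\<mu>) - (\<integral>x. f x \<partial>\<gamma>))"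
    by (simp add: integral_minus)
  then have "0 \<le> ereal ((\<integral>x. f x \<partial>\<mu>) - (\<integral>x. f x \<partial>\<gamma>)) \<or> 0 \<le> ereal ((\<integral>x. - f x \<partial>\<mu>) - (\<integral>x. - f x \<partial>\<gamma>))"
    by auto
  then show ?thesis using a b by (meson order_trans)
qed

lemma int_close:
  fixes h f :: "'a \<Rightarrow> real"
  assumes "prob_space M" "AE x in M. x \<in> \<Omega>" "integrable M h" "integrable M f"
    "\<forall>y\<in>\<Omega>. \<bar>h y - f y\<bar> \<le> \<delta>"
  shows "\<bar>(\<integral>x. h x \<partial>M) - (\<integral>x. f x \<partial>M)\<bar> \<le> \<delta>"
proof -
  have ae1: "AE x in M. h x - f x \<le> \<delta>"
    using assms(2)
  proof (rule AE_mp, intro AE_I2 impI)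
    fix x assume "x \<in> \<Omega>"
    then have "\<bar>h x - f x\<bar> \<le> \<delta>" using assms(5) by blast
    then show "h x - f x \<le> \<delta>" by linarith
  qed
  have ae2: "AE x in M. f x - h x \<le> \<delta>"
    using assms(2)
  proof (rule AE_mp, intro AE_I2 impI)
    fix x assume "x \<in> \<Omega>"
    then have "\<bar>h x - f x\<bar> \<le> \<delta>" using assms(5) by blast
    then show "f x - h x \<le> \<delta>" by linarith
  qed
  have 1: "(\<integral>x. h x - f x \<partial>M) \<le> \<delta>"
    by (rule prob_space.integral_le_const[OF assms(1) _ ae1]) (use assms in auto)
  have 2: "(\<integral>x. f x - h x \<partial>M) \<le> \<delta>"
    by (rule prob_space.integral_le_const[OF assms(1) _ ae2]) (use assms in auto)
  show ?thesis using 1 2 assms(3,4) by (simp add: integral_diff)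
qed

lemma core:
  fixes h f :: "'a \<Rightarrow> real"
  assumes "prob_space \<mu>" "prob_space \<mu>t" "prob_space \<gamma>"
    "AE x in \<mu>. x \<in> \<Omega>" "AE x in \<mu>t. x \<in> \<Omega>" "AE x in \<gamma>. x \<in> \<Omega>"
    "\<And>f. f \<in> F \<union> H \<Longrightarrow> integrable \<mu> f"
    "\<And>f. f \<in> F \<union> H \<Longrightarrow> integrable \<mu>t f"
    "\<And>f. f \<in> F \<union> H \<Longrightarrow> integrable \<gamma> f"
    "h \<in> H" "f \<in> F" "\<forall>y\<in>\<Omega>. \<bar>h y - f y\<bar> \<le> \<delta>"
  shows "ereal ((\<integral>x. h x \<partial>\<mu>) - (\<integral>x. h x \<partial>\<gamma>))
     \<le> min (ipm F \<mu> \<mu>t) (ipm H \<mu> \<mu>t) + ipm F \<mu>t \<gamma> + ereal (2 * \<delta>)"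
proof -
  define a where "a = (\<integral>x. f x \<partial>\<mu>) - (\<integral>x. f x \<partial>\<mu>t)"
  define a' where "a' = (\<integral>x. h x \<partial>\<mu>) - (\<integral>x. h x \<partial>\<mu>t)"
  define b where "b = (\<integral>x. f x \<partial>\<mu>t) - (\<integral>x. f x \<partial>\<gamma>)"
  have c1: "\<bar>(\<integral>x. h x \<partial>\<mu>) - (\<integral>x. f x \<partial>\<mu>)\<bar> \<le> \<delta>"
    by (rule int_close[OF assms(1,4)]) (use assms in auto)
  have c2: "\<bar>(\<integral>x. h x \<partial>\<mu>t) - (\<integral>x. f x \<partial>\<mu>t)\<bar> \<le> \<delta>"
    by (rule int_close[OF assms(2,5)]) (use assms in auto)
  have c3: "\<bar>(\<integral>x. h x \<partial>\<gamma>) - (\<integral>x. f x \<partial>\<gamma>)\<bar> \<le> \<delta>"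
    by (rule int_close[OF assms(3,6)]) (use assms in auto)
  have r: "(\<integral>x. h x \<partial>\<mu>) - (\<integral>x. h x \<partial>\<gamma>) \<le> min a a' + b + 2 * \<delta>"
    using c1 c2 c3 unfolding a_def a'_def b_def by (auto simp: abs_le_iff)
  have A: "ereal a \<le> ipm F \<mu> \<mu>t" unfolding a_def by (rule ipm_upper[OF assms(11)])
  have A': "ereal a' \<le> ipm H \<mu> \<mu>t" unfolding a'_def by (rule ipm_upper[OF assms(10)])
  have B: "ereal b \<le> ipm F \<mu>t \<gamma>" unfolding b_def by (rule ipm_upper[OF assms(11)])
  have "ereal (min a a') = min (ereal a) (ereal a')" by (simp add: min_def)
  then have "ereal (min a a') \<le> min (ipm F \<mu> \<mu>t) (ipm H \<mu> \<mu>t)" using A A'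
    by (metis min.coboundedI1 min.coboundedI2 order_trans min.bounded_iff)
  then have "ereal (min a a') + ereal b + ereal (2 * \<delta>) \<le> min (ipm F \<mu> \<mu>t) (ipm H \<mu> \<mu>t) + ipm F \<mu>t \<gamma> + ereal (2 * \<delta>)"
    using B by (intro add_mono) auto
  moreover have "ereal ((\<integral>x. h x \<partial>\<mu>) - (\<integral>x. h x \<partial>\<gamma>)) \<le> ereal (min a a' + b + 2 * \<delta>)"
    using r by (simp only: ereal_less_eq)
  moreover have "ereal (min a a' + b + 2 * \<delta>) = ereal (min a a') + ereal b + ereal (2 * \<delta>)"
    by (simp only: plus_ereal.simps)
  ultimately show ?thesis by (metis order_trans)
qed

lemma approx_step:
  fixes x :: real and c :: ereal
  assumes "h \<in> H" "\<Omega> \<noteq> {}" "c \<noteq> -\<infinity>"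
    and step: "\<And>f \<delta>. f \<in> F \<Longrightarrow> (\<forall>y\<in>\<Omega>. \<bar>h y - f y\<bar> \<le> \<delta>) \<Longrightarrow> ereal x \<le> c + ereal (2 * \<delta>)"
  shows "ereal x \<le> c + 2 * approx_err H F \<Omega>"
proof -
  define S where "S f = (SUP y\<in>\<Omega>. ereal \<bar>h y - f y\<bar>)" for f
  have IS: "(INF f\<in>F. S f) \<le> approx_err H F \<Omega>"
    unfolding approx_err_def S_def by (rule SUP_upper2[OF assms(1)]) simp
  have S0: "0 \<le> S f" for f
  proof -
    obtain y where "y \<in> \<Omega>" using assms(2) by auto
    then have "ereal \<bar>h y - f y\<bar> \<le> S f" unfolding S_def by (rule SUP_upper)
    then show ?thesis by (meson abs_ge_zero ereal_less_eq(5) order_trans)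
  qed
  have E0: "0 \<le> approx_err H F \<Omega>"
    using IS by (meson INF_greatest S0 order_trans)
  show ?thesis
  proof (cases "approx_err H F \<Omega> = \<infinity>")
    case True
    then show ?thesis using assms(3) by simp
  next
    case False
    then obtain r where r: "approx_err H F \<Omega> = ereal r" "r \<ge> 0" using E0
      by (cases "approx_err H F \<Omega>") auto
    show ?thesis
    proof (rule ereal_le_epsilon2)
      fix e :: real assume e: "0 < e"
      have "(INF f\<in>F. S f) < ereal (r + e/2)" using IS r e by (simp add: order_le_less_trans)
      then obtain f where f: "f \<in> F" "S f < ereal (r + e/2)" by (auto simp: INF_less_iff)
      have "\<forall>y\<in>\<Omega>. \<bar>h y - f y\<bar> \<le> r + e/2"
      proof
        fix y assume "y \<in> \<Omega>"
        then have "ereal \<bar>h y - f y\<bar> \<le> S f" unfolding S_def by (rule SUP_upper)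
        then have "ereal \<bar>h y - f y\<bar> < ereal (r + e/2)" using f(2) by (rule order_le_less_trans)
        then show "\<bar>h y - f y\<bar> \<le> r + e/2" by simp
      qed
      then have "ereal x \<le> c + ereal (2 * (r + e/2))" using step f(1) by blast
      also have "\<dots> = c + 2 * approx_err H F \<Omega> + ereal e"
        using r assms(3) by (cases c) (auto simp: algebra_simps)
      finally show "ereal x \<le> c + 2 * approx_err H F \<Omega> + ereal e" .
    qed
  qed
qed

lemma ereal_two_times: "2 * (D::ereal) = D + D"
  by (cases D) auto

lemma emp_shift:
  fixes f :: "'d::euclidean_space \<Rightarrow> real" and \<phi> :: "'k::euclidean_space \<Rightarrow> 'd"
  assumes "sets \<nu> = sets borel" "sets \<nu>' = sets borel" "\<phi> \<in> G" "f \<in> F"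
    "\<phi> \<in> borel_measurable borel" "f \<in> borel_measurable borel"
    "\<And>f. f \<in> F \<Longrightarrow> (\<lambda>x. - f x) \<in> F"
  shows "ereal ((\<integral>x. f x \<partial>pushfwd \<phi> \<nu>) - (\<integral>x. f x \<partial>pushfwd \<phi> \<nu>')) \<le> ipm (comp_class F G) \<nu> \<nu>'"
    and "ereal ((\<integral>x. f x \<partial>pushfwd \<phi> \<nu>') - (\<integral>x. f x \<partial>pushfwd \<phi> \<nu>)) \<le> ipm (comp_class F G) \<nu> \<nu>'"
proof -
  have m1: "\<phi> \<in> measurable \<nu> borel" using assms(1,5) measurable_cong_sets by blast
  have m2: "\<phi> \<in> measurable \<nu>' borel" using assms(2,5) measurable_cong_sets by blast
  have i1: "(\<integral>x. f x \<partial>pushfwd \<phi> \<nu>) = (\<integral>x. (f \<circ> \<phi>) x \<partial>\<nu>)"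
    unfolding pushfwd_def using integral_distr[OF m1 assms(6)] by simp
  have i2: "(\<integral>x. f x \<partial>pushfwd \<phi> \<nu>') = (\<integral>x. (f \<circ> \<phi>) x \<partial>\<nu>')"
    unfolding pushfwd_def using integral_distr[OF m2 assms(6)] by simp
  have c1: "f \<circ> \<phi> \<in> comp_class F G" unfolding comp_class_def using assms(3,4) by blast
  have c2: "(\<lambda>x. - f x) \<circ> \<phi> \<in> comp_class F G" unfolding comp_class_def using assms(3,4,7) by blast
  show "ereal ((\<integral>x. f x \<partial>pushfwd \<phi> \<nu>) - (\<integral>x. f x \<partial>pushfwd \<phi> \<nu>')) \<le> ipm (comp_class F G) \<nu> \<nu>'"
    unfolding i1 i2 by (rule ipm_upper[OF c1])
  have "ereal ((\<integral>x. ((\<lambda>x. - f x) \<circ> \<phi>) x \<partial>\<nu>) - (\<integral>x. ((\<lambda>x. - f x) \<circ> \<phi>) x \<partial>\<nu>')) \<le> ipm (comp_class F G) \<nu> \<nu>'"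
    by (rule ipm_upper[OF c2])
  then show "ereal ((\<integral>x. f x \<partial>pushfwd \<phi> \<nu>') - (\<integral>x. f x \<partial>pushfwd \<phi> \<nu>)) \<le> ipm (comp_class F G) \<nu> \<nu>'"
    unfolding i1 i2 by (simp add: integral_minus o_def)
qed

theorem lemma24:
  fixes \<nu> :: "'k::euclidean_space measure"
    and \<mu> \<mu>t :: "'d::euclidean_space measure"
    and G :: "('k \<Rightarrow> 'd) set"
    and F H :: "('d \<Rightarrow> real) set"
    and \<Omega> :: "'d set"
    and Z :: "nat \<Rightarrow> 'k" and m :: nat
    and eps :: real
    and gn gnm :: "'k \<Rightarrow> 'd"
  assumes nu: "prob_space \<nu>" "sets \<nu> = sets borel"
    and mu: "prob_space \<mu>" "sets \<mu> = sets borel"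
    and mut: "prob_space \<mu>t" "sets \<mu>t = sets borel"
    and G_meas: "\<And>g. g \<in> G \<Longrightarrow> g \<in> borel_measurable borel"
    and F_nonempty: "F \<noteq> {}"
    and F_sym: "\<And>f. f \<in> F \<Longrightarrow> (\<lambda>x. - f x) \<in> F"
    and FH_meas: "\<And>f. f \<in> F \<union> H \<Longrightarrow> f \<in> borel_measurable borel"
    and FH_int_mu: "\<And>f. f \<in> F \<union> H \<Longrightarrow> integrable \<mu> f"
    and FH_int_mut: "\<And>f. f \<in> F \<union> H \<Longrightarrow> integrable \<mu>t f"
    and FH_int_push: "\<And>f g. f \<in> F \<union> H \<Longrightarrow> g \<in> G \<Longrightarrow> integrable (pushfwd g \<nu>) f"
    and mu_supp: "AE x in \<mu>. x \<in> \<Omega>"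
    and push_supp: "\<And>g. g \<in> G \<Longrightarrow> AE x in pushfwd g \<nu>. x \<in> \<Omega>"
    and mut_supp: "AE x in \<mu>t. x \<in> \<Omega>"
    and m_pos: "m \<ge> 1"
    and eps_nonneg: "eps \<ge> 0"
    and gn: "gn \<in> G"
      "ipm F \<mu>t (pushfwd gn \<nu>) \<le> (INF \<phi>\<in>G. ipm F \<mu>t (pushfwd \<phi> \<nu>)) + ereal eps"
    and gnm: "gnm \<in> G"
      "ipm F \<mu>t (pushfwd gnm (empirical Z m))
         \<le> (INF \<phi>\<in>G. ipm F \<mu>t (pushfwd \<phi> (empirical Z m))) + ereal eps"
  shows "(ipm H \<mu> (pushfwd gn \<nu>)
           \<le> ereal eps + 2 * approx_err H F \<Omega> + (INF g\<in>G. ipm F \<mu>t (pushfwd g \<nu>))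
             + min (ipm F \<mu> \<mu>t) (ipm H \<mu> \<mu>t))
         \<and> (ipm H \<mu> (pushfwd gnm \<nu>)
           \<le> ereal eps + 2 * approx_err H F \<Omega> + (INF g\<in>G. ipm F \<mu>t (pushfwd g \<nu>))
             + min (ipm F \<mu> \<mu>t) (ipm H \<mu> \<mu>t)
             + 2 * ipm (comp_class F G) \<nu> (empirical Z m))"
  proof -
  define E where "E = approx_err H F \<Omega>"
  define I where "I = (INF g\<in>G. ipm F \<mu>t (pushfwd g \<nu>))"
  define M where "M = min (ipm F \<mu> \<mu>t) (ipm H \<mu> \<mu>t)"
  define nh where "nh = empirical Z m"
  define D where "D = ipm (comp_class F G) \<nu> nh"
  have \<Omega>ne: "\<Omega> \<noteq> {}"
  proof
    assume "\<Omega> = {}"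
    then have "AE x in \<mu>. False" using mu_supp by simp
    then show False using mu(1) by (simp add: prob_space.AE_False)
  qed
  have push_prob: "prob_space (pushfwd g \<nu>)" if "g \<in> G" for g
  proof -
    have "g \<in> measurable \<nu> borel" using nu(2) G_meas[OF that] measurable_cong_sets by blast
    then show ?thesis unfolding pushfwd_def by (rule prob_space.prob_space_distr[OF nu(1)])
  qed
  have Fnn: "0 \<le> ipm F a b" for a b by (rule ipm_nonneg[OF F_nonempty F_sym])
  have I0: "0 \<le> I" unfolding I_def by (rule INF_greatest) (rule Fnn)
  show ?thesis
  proof (cases "H = {}")
    case True
    then show ?thesis by (simp add: ipm_def)
  next
    case False
    then obtain h0 where h0: "h0 \<in> H" by auto
    have Mfin: "M \<noteq> -\<infinity>"
    proof -
      have "ereal ((\<integral>x. h0 x \<partial>\<mu>) - (\<integral>x. h0 x \<partial>\<mu>t)) \<le> ipm H \<mu> \<mu>t" by (rule ipm_upper[OF h0])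
      then have "ipm H \<mu> \<mu>t \<noteq> -\<infinity>" by auto
      moreover have "ipm F \<mu> \<mu>t \<noteq> -\<infinity>" using Fnn[of \<mu> \<mu>t] by auto
      ultimately show ?thesis unfolding M_def by (auto simp: min_def)
    qed
    have gen: "ipm H \<mu> \<gamma> \<le> c + M + 2 * E"
      if \<gamma>: "prob_space \<gamma>" "AE x in \<gamma>. x \<in> \<Omega>" "\<And>f. f \<in> F \<union> H \<Longrightarrow> integrable \<gamma> f"
        and c: "0 \<le> c" "ipm F \<mu>t \<gamma> \<le> c" for \<gamma> c
      unfolding ipm_def
    proof (rule SUP_least)
      fix h assume h: "h \<in> H"
      have cM: "c + M \<noteq> -\<infinity>" using c(1) Mfin by (cases c; cases M) auto
      show "ereal ((\<integral>x. h x \<partial>\<mu>) - (\<integral>x. h x \<partial>\<gamma>)) \<le> c + M + 2 * E"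
        unfolding E_def
      proof (rule approx_step[OF h \<Omega>ne cM])
        fix f \<delta> assume f: "f \<in> F" "\<forall>y\<in>\<Omega>. \<bar>h y - f y\<bar> \<le> \<delta>"
        have "ereal ((\<integral>x. h x \<partial>\<mu>) - (\<integral>x. h x \<partial>\<gamma>)) \<le> M + ipm F \<mu>t \<gamma> + ereal (2 * \<delta>)"
          unfolding M_def
          by (rule core[OF mu(1) mut(1) \<gamma>(1) mu_supp mut_supp \<gamma>(2) FH_int_mu FH_int_mut \<gamma>(3) h f])
        also have "\<dots> \<le> M + c + ereal (2 * \<delta>)" using c(2) by (intro add_mono) auto
        finally show "ereal ((\<integral>x. h x \<partial>\<mu>) - (\<integral>x. h x \<partial>\<gamma>)) \<le> c + M + ereal (2 * \<delta>)"
          by (simp add: ac_simps)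
      qed
    qed
    have part1: "ipm H \<mu> (pushfwd gn \<nu>) \<le> (ereal eps + I) + M + 2 * E"
    proof (rule gen)
      show "prob_space (pushfwd gn \<nu>)" by (rule push_prob[OF gn(1)])
      show "AE x in pushfwd gn \<nu>. x \<in> \<Omega>" by (rule push_supp[OF gn(1)])
      show "\<And>f. f \<in> F \<union> H \<Longrightarrow> integrable (pushfwd gn \<nu>) f" by (rule FH_int_push[OF _ gn(1)])
      show "0 \<le> ereal eps + I" using eps_nonneg I0 by simp
      show "ipm F \<mu>t (pushfwd gn \<nu>) \<le> ereal eps + I" using gn(2) unfolding I_def by (simp add: ac_simps)
    qed
    have sets_nh: "sets nh = sets borel" unfolding nh_def empirical_def by simp
    have F_meas: "f \<in> borel_measurable borel" if "f \<in> F" for f using FH_meas that by blast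
    have shift: "ereal ((\<integral>x. f x \<partial>pushfwd \<phi> \<nu>) - (\<integral>x. f x \<partial>pushfwd \<phi> nh)) \<le> D"
       "ereal ((\<integral>x. f x \<partial>pushfwd \<phi> nh) - (\<integral>x. f x \<partial>pushfwd \<phi> \<nu>)) \<le> D"
      if "\<phi> \<in> G" "f \<in> F" for \<phi> f
      unfolding D_def
      using emp_shift[OF nu(2) sets_nh that G_meas[OF that(1)] F_meas[OF that(2)] F_sym] by auto
    have s1: "ipm F \<mu>t (pushfwd \<phi> nh) \<le> ipm F \<mu>t (pushfwd \<phi> \<nu>) + D" if "\<phi> \<in> G" for \<phi>
      unfolding ipm_def[of F \<mu>t "pushfwd \<phi> nh"]
    proof (rule SUP_least)
      fix f assume f: "f \<in> F"
      have "ereal ((\<integral>x. f x \<partial>\<mu>t) - (\<integral>x. f x \<partial>pushfwd \<phi> nh))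
        = ereal ((\<integral>x. f x \<partial>\<mu>t) - (\<integral>x. f x \<partial>pushfwd \<phi> \<nu>))
          + ereal ((\<integral>x. f x \<partial>pushfwd \<phi> \<nu>) - (\<integral>x. f x \<partial>pushfwd \<phi> nh))" by simp
      also have "\<dots> \<le> ipm F \<mu>t (pushfwd \<phi> \<nu>) + D"
        by (intro add_mono ipm_upper[OF f] shift(1)[OF that f])
      finally show "ereal ((\<integral>x. f x \<partial>\<mu>t) - (\<integral>x. f x \<partial>pushfwd \<phi> nh)) \<le> ipm F \<mu>t (pushfwd \<phi> \<nu>) + D" .
    qed
    have s2: "ipm F \<mu>t (pushfwd gnm \<nu>) \<le> ipm F \<mu>t (pushfwd gnm nh) + D"
      unfolding ipm_def[of F \<mu>t "pushfwd gnm \<nu>"]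
    proof (rule SUP_least)
      fix f assume f: "f \<in> F"
      have "ereal ((\<integral>x. f x \<partial>\<mu>t) - (\<integral>x. f x \<partial>pushfwd gnm \<nu>))
        = ereal ((\<integral>x. f x \<partial>\<mu>t) - (\<integral>x. f x \<partial>pushfwd gnm nh))
          + ereal ((\<integral>x. f x \<partial>pushfwd gnm nh) - (\<integral>x. f x \<partial>pushfwd gnm \<nu>))" by simp
      also have "\<dots> \<le> ipm F \<mu>t (pushfwd gnm nh) + D"
        by (intro add_mono ipm_upper[OF f] shift(2)[OF gnm(1) f])
      finally show "ereal ((\<integral>x. f x \<partial>\<mu>t) - (\<integral>x. f x \<partial>pushfwd gnm \<nu>)) \<le> ipm F \<mu>t (pushfwd gnm nh) + D" .
    qed
    have D0: "0 \<le> D" unfolding D_def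
    proof (rule ipm_nonneg)
      show "comp_class F G \<noteq> {}" using F_nonempty gn(1) unfolding comp_class_def by blast
      fix f assume "f \<in> comp_class F G"
      then obtain f' g where "f = f' \<circ> g" "f' \<in> F" "g \<in> G" unfolding comp_class_def by blast
      then show "(\<lambda>x. - f x) \<in> comp_class F G" unfolding comp_class_def
        by (intro CollectI exI[of _ "\<lambda>x. - f' x"] exI[of _ g]) (auto simp: F_sym o_def)
    qed
    have s3: "(INF \<phi>\<in>G. ipm F \<mu>t (pushfwd \<phi> nh)) \<le> I + D"
    proof (cases "I = \<infinity>")
      case True
      then show ?thesis by simp
    next
      case False
      then obtain i where i: "I = ereal i" using I0 by (cases I) auto
      show ?thesis
      proof (rule ereal_le_epsilon2)
        fix e :: real assume e: "0 < e"
        have "I < ereal (i + e)" using i e by simp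
        then obtain \<phi> where \<phi>: "\<phi> \<in> G" "ipm F \<mu>t (pushfwd \<phi> \<nu>) < ereal (i + e)"
          unfolding I_def by (auto simp: INF_less_iff)
        have "(INF \<phi>\<in>G. ipm F \<mu>t (pushfwd \<phi> nh)) \<le> ipm F \<mu>t (pushfwd \<phi> nh)"
          by (rule INF_lower[OF \<phi>(1)])
        also have "\<dots> \<le> ipm F \<mu>t (pushfwd \<phi> \<nu>) + D" by (rule s1[OF \<phi>(1)])
        also have "\<dots> \<le> ereal (i + e) + D" using \<phi>(2) by (intro add_mono) auto
        also have "\<dots> = I + D + ereal e" using i D0 by (cases D) auto
        finally show "(INF \<phi>\<in>G. ipm F \<mu>t (pushfwd \<phi> nh)) \<le> I + D + ereal e" .
      qed
    qed
    have chain: "ipm F \<mu>t (pushfwd gnm \<nu>) \<le> ereal eps + I + 2 * D"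
    proof -
      have "ipm F \<mu>t (pushfwd gnm \<nu>) \<le> ipm F \<mu>t (pushfwd gnm nh) + D" by (rule s2)
      also have "\<dots> \<le> ((INF \<phi>\<in>G. ipm F \<mu>t (pushfwd \<phi> nh)) + ereal eps) + D"
        using gnm(2) unfolding nh_def by (intro add_mono) auto
      also have "\<dots> \<le> ((I + D) + ereal eps) + D" using s3 by (intro add_mono) auto
      also have "\<dots> = ereal eps + I + 2 * D" unfolding ereal_two_times by (simp add: ac_simps)
      finally show ?thesis .
    qed
    have part2: "ipm H \<mu> (pushfwd gnm \<nu>) \<le> (ereal eps + I + 2 * D) + M + 2 * E"
    proof (rule gen)
      show "prob_space (pushfwd gnm \<nu>)" by (rule push_prob[OF gnm(1)])
      show "AE x in pushfwd gnm \<nu>. x \<in> \<Omega>" by (rule push_supp[OF gnm(1)])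
      show "\<And>f. f \<in> F \<union> H \<Longrightarrow> integrable (pushfwd gnm \<nu>) f" by (rule FH_int_push[OF _ gnm(1)])
      show "0 \<le> ereal eps + I + 2 * D" using eps_nonneg I0 D0 by simp
      show "ipm F \<mu>t (pushfwd gnm \<nu>) \<le> ereal eps + I + 2 * D" by (rule chain)
    qed
    show ?thesis
      using part1 part2 unfolding E_def I_def M_def D_def nh_def by (simp add: ac_simps)
  qed
qed

end
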